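(* Let $\mathcal{M}$ be an orientable, compact, boundaryless, connected Riemannian manifold with volume form $dV$, and let $\mu:\mathcal{M}\to\mathbb{R}_{>0}$ be a continuous probability density. Let $\epsilon>0$ satisfy $\epsilon<\min_{x\in\mathcal{M}}\mu(x)$ and let $\lambda\ge 1$. For a continuous function $\bar\mu:\mathcal{M}\to\mathbb{R}$ with $\int_{\mathcal{M}}\bar\mu\,dV=1$, define $\bar\mu_+(x)=\max\{\epsilon,\bar\mu(x)\}$, $\bar\mu_-(x)=\epsilon-\min\{\epsilon,\bar\mu(x)\}$, and $$\ell(\bar\mu) = -\mathbb{E}_{x\sim\mu}\log\bar\mu_+(x) + \lambda\int_{\mathcal{M}}\bar\mu_-\,dV.$$ Then, over the set of continuous functions $\bar\mu$ on $\mathcal{M}$ with $\int_{\mathcal{M}}\bar\mu\,dV=1$, the function $\bar\mu=\mu$ is a minimizer of $\ell$, and it is the unique minimizer.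
   Context: $\mathbb{E}_{x\sim\mu}f(x)=\int_{\mathcal{M}} f\mu\,dV$. Note $\bar\mu_+,\bar\mu_-\ge 0$ and $\bar\mu=\bar\mu_+-\bar\mu_-$. (In the paper $\bar\mu$ is of the form $\nu-\operatorname{div}(u)$, which automatically has integral one.) *)

theory Defs
  imports "HOL-Analysis.Analysis"
begin

text \<open>The volume measure dV of the manifold is modelled abstractly as a finite Borel
measure V on a compact connected subset M of a metric space, with full support.\<close>

definition mu_plus :: "real \<Rightarrow> ('a \<Rightarrow> real) \<Rightarrow> 'a \<Rightarrow> real" where
  "mu_plus eps f x = max eps (f x)"

definition mu_minus :: "real \<Rightarrow> ('a \<Rightarrow> real) \<Rightarrow> 'a \<Rightarrow> real" where
  "mu_minus eps f x = eps - min eps (f x)"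

text \<open>E_{x~mu} g(x) = integral of g * mu dV.\<close>
definition ell :: "'a measure \<Rightarrow> ('a \<Rightarrow> real) \<Rightarrow> real \<Rightarrow> real \<Rightarrow> ('a \<Rightarrow> real) \<Rightarrow> real" where
  "ell V mu eps lam f =
     - (\<integral>x. ln (mu_plus eps f x) * mu x \<partial>V) + lam * (\<integral>x. mu_minus eps f x \<partial>V)"

definition admissible :: "'a::topological_space set \<Rightarrow> 'a measure \<Rightarrow> ('a \<Rightarrow> real) \<Rightarrow> bool" where
  "admissible M V f \<longleftrightarrow> continuous_on M f \<and> (\<integral>x. f x \<partial>V) = 1"

end

theory Submission
  imports Defs
begin

theorem theorem2:
  fixes M :: "'a::metric_space set" and V :: "'a measure"
    and mu :: "'a \<Rightarrow> real" and eps lam :: real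
  assumes "compact M" and "connected M"
    and "sets V = sets (restrict_space borel M)"
    and "finite_measure V"
    and "\<And>U. open U \<Longrightarrow> U \<inter> M \<noteq> {} \<Longrightarrow> emeasure V (U \<inter> M) > 0"
    and "continuous_on M mu" and "\<And>x. x \<in> M \<Longrightarrow> mu x > 0"
    and "(\<integral>x. mu x \<partial>V) = 1"
    and "eps > 0" and "\<And>x. x \<in> M \<Longrightarrow> eps < mu x"
    and "lam \<ge> 1"
  shows "admissible M V mu
    \<and> (\<forall>f. admissible M V f \<longrightarrow> ell V mu eps lam mu \<le> ell V mu eps lam f)
    \<and> (\<forall>f. admissible M V f \<and> (\<forall>g. admissible M V g \<longrightarrow> ell V mu eps lam f \<le> ell V mu eps lam g)
           \<longrightarrow> (\<forall>x\<in>M. f x = mu x))"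
proof -
  interpret finite_measure V by fact
  have spV: "space V = M"
    using sets_eq_imp_space_eq[OF assms(3)] by (simp add: space_restrict_space)
  have integ: "integrable V g" if g: "continuous_on M g" for g :: "'a \<Rightarrow> real"
  proof -
    have "compact (g ` M)" using compact_continuous_image[OF g assms(1)] .
    then obtain B where B: "\<forall>y\<in>g ` M. norm y \<le> B"
      using compact_imp_bounded bounded_iff by metis
    have meas: "g \<in> borel_measurable V"
      using measurable_cong_sets[OF assms(3) refl] borel_measurable_continuous_on_restrict[OF g]
      by blast
    show ?thesis
      by (rule integrable_const_bound[where B=B]) (use B spV meas in auto)
  qed
  have mu_int: "integrable V mu" using integ assms(6) by blast
  define L0 where "L0 = (\<integral>x. ln (mu x) * mu x \<partial>V)"
  have cont_lnmu: "continuous_on M (\<lambda>x. ln (mu x) * mu x)"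
    by (intro continuous_intros assms(6)) (use assms(7) in force)
  have ellmu: "ell V mu eps lam mu = - L0"
  proof -
    have 1: "(\<integral>x. ln (mu_plus eps mu x) * mu x \<partial>V) = L0"
      unfolding L0_def
      by (rule Bochner_Integration.integral_cong) (use spV assms(10) in \<open>auto simp: mu_plus_def intro!: max_absorb2 less_imp_le\<close>)
    have 2: "(\<integral>x. mu_minus eps mu x \<partial>V) = 0"
    proof -
      have "(\<integral>x. mu_minus eps mu x \<partial>V) = (\<integral>x. 0 \<partial>V)"
        by (rule Bochner_Integration.integral_cong) (use spV assms(10) in \<open>auto simp: mu_minus_def intro!: min_absorb1 less_imp_le\<close>)
      thus ?thesis by simp
    qed
    show ?thesis unfolding ell_def 1 2 by simp
  qed
  have key: "ell V mu eps lam f \<ge> - L0 + (lam - 1) * (\<integral>x. mu_minus eps f x \<partial>V)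
     \<and> (\<integral>x. mu_minus eps f x \<partial>V) \<ge> 0
     \<and> (ell V mu eps lam f = - L0 + (lam - 1) * (\<integral>x. mu_minus eps f x \<partial>V)
        \<longrightarrow> (\<forall>x\<in>M. f x = mu x))"
    if adm: "admissible M V f" for f
  proof -
    have fc: "continuous_on M f" and f1: "(\<integral>x. f x \<partial>V) = 1"
      using adm unfolding admissible_def by auto
    define p where "p x = max eps (f x)" for x
    define q where "q x = eps - min eps (f x)" for x
    have pp: "p x > 0" for x using assms(9) unfolding p_def by auto
    have ppn: "p x \<noteq> 0" for x using pp[of x] by simp
    have pc: "continuous_on M p" unfolding p_def by (intro continuous_intros fc)
    have qc: "continuous_on M q" unfolding q_def by (intro continuous_intros fc)
    have lpc: "continuous_on M (\<lambda>x. ln (p x) * mu x)"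
      by (intro continuous_intros pc assms(6)) (use ppn in simp)
    define h where "h x = ln (mu x) * mu x + p x - mu x - ln (p x) * mu x" for x
    have hc: "continuous_on M h" unfolding h_def
      by (intro continuous_intros cont_lnmu pc assms(6) lpc)
    have hnn: "h x \<ge> 0" if "x \<in> M" for x
    proof -
      have m: "mu x > 0" using assms(7) that .
      have "ln (p x) - ln (mu x) \<le> (p x - mu x) / mu x" using ln_diff_le[OF pp m] .
      hence "(ln (p x) - ln (mu x)) * mu x \<le> p x - mu x" using m by (simp add: field_simps)
      thus ?thesis unfolding h_def by (simp add: algebra_simps)
    qed
    have pq: "p x = f x + q x" for x unfolding p_def q_def by (simp add: max_def min_def)
    have qnn: "q x \<ge> 0" for x unfolding q_def by simp
    have iq: "integrable V q" using integ qc by blast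
    have ip: "integrable V p" using integ pc by blast
    have if_: "integrable V f" using integ fc by blast
    have ilp: "integrable V (\<lambda>x. ln (p x) * mu x)" using integ lpc by blast
    have ilm: "integrable V (\<lambda>x. ln (mu x) * mu x)" using integ cont_lnmu by blast
    have ih: "integrable V h" using integ hc by blast
    have Ip: "(\<integral>x. p x \<partial>V) = 1 + (\<integral>x. q x \<partial>V)"
      using f1 if_ iq by (simp add: pq)
    have Ih: "(\<integral>x. h x \<partial>V) = L0 + (\<integral>x. q x \<partial>V) - (\<integral>x. ln (p x) * mu x \<partial>V)"
    proof -
      have e1: "(\<integral>x. h x \<partial>V) = (\<integral>x. ln (mu x) * mu x + p x - mu x \<partial>V) - (\<integral>x. ln (p x) * mu x \<partial>V)"
        unfolding h_def by (rule Bochner_Integration.integral_diff) (intro Bochner_Integration.integrable_diff Bochner_Integration.integrable_add ilm ip mu_int, rule ilp)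
      have e2: "(\<integral>x. ln (mu x) * mu x + p x - mu x \<partial>V) = (\<integral>x. ln (mu x) * mu x + p x \<partial>V) - (\<integral>x. mu x \<partial>V)"
        by (rule Bochner_Integration.integral_diff) (intro Bochner_Integration.integrable_add ilm ip, rule mu_int)
      have e3: "(\<integral>x. ln (mu x) * mu x + p x \<partial>V) = L0 + (\<integral>x. p x \<partial>V)"
        unfolding L0_def by (rule Bochner_Integration.integral_add[OF ilm ip])
      show ?thesis unfolding e1 e2 e3 Ip assms(8) by simp
    qed
    have Ihnn: "(\<integral>x. h x \<partial>V) \<ge> 0"
      by (rule integral_nonneg_AE) (use hnn spV in \<open>auto intro: AE_I2\<close>)
    have Iqnn: "(\<integral>x. q x \<partial>V) \<ge> 0" using qnn by (simp add: integral_nonneg_AE)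
    have ellf: "ell V mu eps lam f = - (\<integral>x. ln (p x) * mu x \<partial>V) + lam * (\<integral>x. q x \<partial>V)"
      unfolding ell_def mu_plus_def mu_minus_def p_def q_def by simp
    have qeq: "(\<integral>x. mu_minus eps f x \<partial>V) = (\<integral>x. q x \<partial>V)"
      unfolding mu_minus_def q_def by simp
    have part1: "ell V mu eps lam f \<ge> - L0 + (lam - 1) * (\<integral>x. mu_minus eps f x \<partial>V)"
      using Ihnn Ih ellf qeq by (simp add: algebra_simps)
    have part3: "\<forall>x\<in>M. f x = mu x"
      if eq: "ell V mu eps lam f = - L0 + (lam - 1) * (\<integral>x. mu_minus eps f x \<partial>V)"
    proof
      fix x0 assume x0: "x0 \<in> M"
      have I0: "(\<integral>x. h x \<partial>V) = 0" using eq Ih ellf qeq by (simp add: algebra_simps)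
      have AE0: "AE x in V. h x = 0"
        using integral_nonneg_eq_0_iff_AE[OF ih] I0 hnn spV by (auto intro: AE_I2)
      have h0: "h x0 = 0"
      proof (rule ccontr)
        assume "h x0 \<noteq> 0"
        hence pos: "h x0 > 0" using hnn x0 by force
        obtain U where U: "open U" "U \<inter> M = h -` {0<..} \<inter> M"
          using hc unfolding continuous_on_open_invariant
          by (meson open_greaterThan)
        have ne: "U \<inter> M \<noteq> {}" using U x0 pos by auto
        have gt: "emeasure V (U \<inter> M) > 0" using assms(5)[OF U(1) ne] .
        have UM: "U \<inter> M \<in> sets V"
          using assms(3) U(1) by (auto simp: sets_restrict_space)
        have "emeasure V (U \<inter> M) = 0"
        proof -
          have s: "{x \<in> space V. \<not> (x \<notin> U \<inter> M)} = U \<inter> M" using spV by auto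
          have ae: "AE x in V. x \<notin> U \<inter> M"
            using AE0 by eventually_elim (use U(2) in auto)
          show ?thesis by (rule iffD1[OF AE_iff_measurable[OF UM s] ae])
        qed
        thus False using gt by simp
      qed
      have m: "mu x0 > 0" using assms(7) x0 .
      have "ln (p x0 / mu x0) = p x0 / mu x0 - 1"
        using h0 m pp[of x0] unfolding h_def by (simp add: ln_div field_simps)
      hence "p x0 / mu x0 = 1" using ln_eq_minus_one[of "p x0 / mu x0"] m pp[of x0] by (meson divide_pos_pos)
      hence "p x0 = mu x0" using m by simp
      thus "f x0 = mu x0" using assms(10)[OF x0] unfolding p_def by (auto simp: max_def split: if_splits)
    qed
    show ?thesis using part1 part3 Iqnn qeq by simp
  qed
  have adm: "admissible M V mu" unfolding admissible_def using assms(6,8) by simp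
  show ?thesis
  proof (intro conjI allI impI adm)
    fix f assume "admissible M V f"
    from key[OF this] show "ell V mu eps lam mu \<le> ell V mu eps lam f"
      using ellmu assms(11) by (smt (verit) mult_nonneg_nonneg)
  next
    fix f assume A: "admissible M V f \<and> (\<forall>g. admissible M V g \<longrightarrow> ell V mu eps lam f \<le> ell V mu eps lam g)"
    hence le: "ell V mu eps lam f \<le> - L0" using adm ellmu by auto
    from key[of f] A have k: "ell V mu eps lam f \<ge> - L0 + (lam - 1) * (\<integral>x. mu_minus eps f x \<partial>V)"
      "(\<integral>x. mu_minus eps f x \<partial>V) \<ge> 0" by auto
    have "(lam - 1) * (\<integral>x. mu_minus eps f x \<partial>V) \<ge> 0" using k(2) assms(11) by simp
    hence "ell V mu eps lam f = - L0 + (lam - 1) * (\<integral>x. mu_minus eps f x \<partial>V)"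
      using le k by linarith
    thus "\<forall>x\<in>M. f x = mu x" using key[of f] A by auto
  qed
qed

end
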